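(* Let $\Gamma$ be a partition of $[n]$ into $k$ nonempty sets, $n_{\min}:=\min_{S\in\Gamma}|S|$, $n_{\max}:=\max_{S\in\Gamma}|S|$, let $p\in(0,1]$, and let $W\subseteq[n]$ be random, containing each index independently with probability $p$; for $S\in\Gamma$ put $S':=S\cap W$. Fix $S,T\in\Gamma$ with $S\ne T$, let $\epsilon\in(0,1)$, and suppose $pn_{\min}\ge\frac{104}3\big(\frac{n_{\max}}{n_{\min}}\big)^2\log\frac6\epsilon$. Then with probability at least $1-\epsilon$, \[\Big|p\Big(\frac1{|S'|}+\frac1{|T'|}\Big)-\Big(\frac1{|S|}+\frac1{|T|}\Big)\Big|<\sqrt{\frac{104}3\cdot\frac{\log(6/\epsilon)}{pn_{\min}^3}}.\]
   Context: Logarithms are natural. *)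

theory Defs
  imports "HOL-Probability.Probability" "HOL-Library.Disjoint_Sets"
begin

(* The random set W \<subseteq> {1..n}, each index included independently with probability p,
   is represented by its indicator function, drawn from the product pmf below. *)
definition random_subset_pmf :: "nat \<Rightarrow> real \<Rightarrow> (nat \<Rightarrow> bool) pmf" where
  "random_subset_pmf n p = Pi_pmf {1..n} False (\<lambda>_. bernoulli_pmf p)"

end

theory Submission
  imports Defs
begin

lemma binom_mgf:
  assumes p: "p \<in> {0..1}"
  shows "measure_pmf.expectation (binomial_pmf m p) (\<lambda>k. exp (s * real k)) = (1 - p + p * exp s) ^ m"
proof -
  have "measure_pmf.expectation (binomial_pmf m p) (\<lambda>k. exp (s * real k))
      = (\<Sum>k\<le>m. exp (s * real k) * pmf (binomial_pmf m p) k)"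
    by (rule integral_measure_pmf_real) (use p in \<open>auto simp: set_pmf_binomial_eq split: if_splits\<close>)
  also have "\<dots> = (\<Sum>k\<le>m. of_nat (m choose k) * (p * exp s) ^ k * (1 - p) ^ (m - k))"
    using p by (intro sum.cong refl) (simp add: pmf_binomial exp_of_nat_mult[symmetric] mult_ac power_mult_distrib)
  also have "\<dots> = (p * exp s + (1 - p)) ^ m" by (rule binomial_ring[symmetric])
  finally show ?thesis by (simp add: add.commute)
qed

lemma binom_markov:
  assumes p: "p \<in> {0..1}"
  shows "measure_pmf.prob (binomial_pmf m p) {k. s * a \<le> s * real k} \<le> exp (- s * a) * (1 - p + p * exp s) ^ m"
proof -
  let ?M = "binomial_pmf m p"
  have "measure_pmf.prob ?M {k. s * a \<le> s * real k} = measure_pmf.expectation ?M (indicator {k. s * a \<le> s * real k})"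
    by simp
  also have "\<dots> \<le> measure_pmf.expectation ?M (\<lambda>k. exp (- s * a) * exp (s * real k))"
  proof (rule integral_mono)
    show "integrable (measure_pmf ?M) (indicator {k. s * a \<le> s * real k} :: nat \<Rightarrow> real)"
      using p by auto
    show "integrable (measure_pmf ?M) (\<lambda>k. exp (- s * a) * exp (s * real k))"
      using p by auto
    fix k
    show "(indicator {k. s * a \<le> s * real k} k :: real) \<le> exp (- s * a) * exp (s * real k)"
    proof (cases "s * a \<le> s * real k")
      case True
      then have "1 \<le> exp (- s * a + s * real k)" by simp
      then show ?thesis using True by (simp add: exp_add[symmetric])
    qed auto
  qed
  also have "\<dots> = exp (- s * a) * (1 - p + p * exp s) ^ m"
    using binom_mgf[OF p] by simp
  finally show ?thesis .
qed

lemma exp_neg_le: "0 \<le> (t::real) \<Longrightarrow> exp (- t) \<le> 1 - t + t^2/2"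
proof -
  assume t: "0 \<le> t"
  have q: "1 + t + t^2/2 \<le> exp t" using exp_lower_Taylor_quadratic[OF t] .
  have pos: "0 < 1 + t + t^2/2" using t by (simp add: add_pos_nonneg)
  have "exp (- t) = 1 / exp t" by (simp add: exp_minus field_simps)
  also have "\<dots> \<le> 1 / (1 + t + t^2/2)" using q pos by (intro divide_left_mono) auto
  also have "\<dots> \<le> 1 - t + t^2/2"
  proof -
    have "1 \<le> (1 - t + t^2/2) * (1 + t + t^2/2)"
      by (simp add: algebra_simps power2_eq_square) (smt (verit) mult_nonneg_nonneg t zero_le_square)
    then show ?thesis using pos by (simp add: divide_le_eq)
  qed
  finally show ?thesis .
qed

lemma pow_le_exp:
  assumes "0 \<le> p" "p \<le> 1" 
  shows "(1 - p + p * exp s) ^ m \<le> exp (real m * p * (exp s - 1))"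
proof -
  have "0 \<le> 1 - p + p * exp s" using assms by (smt (verit) exp_gt_zero mult_nonneg_nonneg)
  moreover have "1 - p + p * exp s \<le> exp (p * (exp s - 1))"
    using exp_ge_add_one_self[of "p * (exp s - 1)"] by (simp add: algebra_simps)
  ultimately have "(1 - p + p * exp s) ^ m \<le> exp (p * (exp s - 1)) ^ m" by (intro power_mono)
  also have "\<dots> = exp (real m * p * (exp s - 1))" by (simp add: exp_of_nat_mult[symmetric] mult_ac)
  finally show ?thesis .
qed

lemma binom_upper:
  assumes p: "0 \<le> p" "p \<le> 1" and d: "0 < d" "d \<le> 2"
  shows "measure_pmf.prob (binomial_pmf m p) {k. (1 + d) * (m * p) \<le> real k} \<le> exp (- (d^2 * (m * p) / 4))"
proof -
  let ?s = "d / 2" and ?a = "(1 + d) * (m * p)"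
  have eq: "{k. (1 + d) * (m * p) \<le> real k} = {k. ?s * ?a \<le> ?s * real k}"
    using d by auto
  have "measure_pmf.prob (binomial_pmf m p) {k. ?s * ?a \<le> ?s * real k} \<le> exp (- ?s * ?a) * (1 - p + p * exp ?s) ^ m"
    using p by (intro binom_markov) auto
  also have "\<dots> \<le> exp (- ?s * ?a) * exp (real m * p * (exp ?s - 1))"
    using pow_le_exp[OF p] by (intro mult_left_mono) auto
  also have "\<dots> = exp (- ?s * ?a + real m * p * (exp ?s - 1))" by (simp only: exp_add[symmetric])
  also have "\<dots> \<le> exp (- (d^2 * (m * p) / 4))"
  proof -
    have e: "exp ?s \<le> 1 + ?s + ?s^2" using d by (intro exp_bound) auto
    have mp: "0 \<le> real m * p" using p by auto
    have "real m * p * (exp ?s - 1) \<le> real m * p * (?s + ?s^2)"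
      using e mp by (intro mult_left_mono) auto
    then show ?thesis by (simp add: power2_eq_square algebra_simps)
  qed
  finally show ?thesis using eq by simp
qed

lemma binom_lower:
  assumes p: "0 \<le> p" "p \<le> 1" and d: "0 < d"
  shows "measure_pmf.prob (binomial_pmf m p) {k. real k \<le> (1 - d) * (m * p)} \<le> exp (- (d^2 * (m * p) / 2))"
proof -
  let ?s = "- d" and ?a = "(1 - d) * (m * p)"
  have eq: "{k. real k \<le> (1 - d) * (m * p)} = {k. ?s * ?a \<le> ?s * real k}"
    using d by auto
  have "measure_pmf.prob (binomial_pmf m p) {k. ?s * ?a \<le> ?s * real k} \<le> exp (- ?s * ?a) * (1 - p + p * exp ?s) ^ m"
    using p by (intro binom_markov) auto
  also have "\<dots> \<le> exp (- ?s * ?a) * exp (real m * p * (exp ?s - 1))"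
    using pow_le_exp[OF p] by (intro mult_left_mono) auto
  also have "\<dots> = exp (- ?s * ?a + real m * p * (exp ?s - 1))" by (simp only: exp_add[symmetric])
  also have "\<dots> \<le> exp (- (d^2 * (m * p) / 2))"
  proof -
    have e: "exp ?s \<le> 1 - d + d^2/2" using d by (intro exp_neg_le) auto
    have mp: "0 \<le> real m * p" using p by auto
    have "real m * p * (exp ?s - 1) \<le> real m * p * (- d + d^2/2)"
      using e mp by (intro mult_left_mono) auto
    then show ?thesis by (simp add: power2_eq_square algebra_simps)
  qed
  finally show ?thesis using eq by simp
qed

lemma card_dist:
  assumes S: "S \<subseteq> {1..n}" and p: "p \<in> {0..1}"
  shows "measure_pmf.prob (random_subset_pmf n p) {w. P (card (S \<inter> {i. w i}))}
       = measure_pmf.prob (binomial_pmf (card S) p) {k. P k}"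
proof -
  have fS: "finite S" using S finite_subset by blast
  have "binomial_pmf (card S) p = map_pmf (\<lambda>f. card {x\<in>S. f x}) (Pi_pmf S False (\<lambda>_. bernoulli_pmf p))"
    by (rule binomial_pmf_altdef') (use fS p in auto)
  also have "Pi_pmf S False (\<lambda>_. bernoulli_pmf p) = map_pmf (\<lambda>f x. if x \<in> S then f x else False) (random_subset_pmf n p)"
    unfolding random_subset_pmf_def by (rule Pi_pmf_subset) (use S in auto)
  finally have eq0: "binomial_pmf (card S) p = map_pmf (\<lambda>f. card {x\<in>S. f x}) (map_pmf (\<lambda>f x. if x \<in> S then f x else False) (random_subset_pmf n p))" .
  have "(\<lambda>f. card {x\<in>S. f x}) \<circ> (\<lambda>f x. if x \<in> S then f x else False) = (\<lambda>w. card (S \<inter> {i. w i}))"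
    proof (rule ext)
    fix w :: "nat \<Rightarrow> bool"
    have "{x\<in>S. (if x \<in> S then w x else False)} = S \<inter> {i. w i}" by auto
    then show "((\<lambda>f. card {x\<in>S. f x}) \<circ> (\<lambda>f x. if x \<in> S then f x else False)) w = card (S \<inter> {i. w i})"
      by (simp add: o_def)
  qed
  then have eq: "binomial_pmf (card S) p = map_pmf (\<lambda>w. card (S \<inter> {i. w i})) (random_subset_pmf n p)"
    using eq0 by (simp add: pmf.map_comp)
  show ?thesis by (simp add: eq)
qed

lemma dev:
  fixes m :: nat and p r X :: real
  assumes m: "m > 0" and p: "p > 0" and r: "0 \<le> r" "r \<le> 17/100"
    and lo: "(1 - sqrt 2 * r) * (p * m) < X" and hi: "X < (1 + 2 * r) * (p * m)"
  shows "X > 0 \<and> \<bar>p / X - 1 / m\<bar> \<le> 2 * r / m"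
proof -
  have s2: "sqrt 2 \<le> 3/2" by (rule real_le_lsqrt) (auto simp: power2_eq_square)
  have s2r: "sqrt 2 * r \<le> 3/2 * r" using s2 r by (intro mult_right_mono) auto
  have s2': "sqrt 2 \<le> 1415/1000" by (rule real_le_lsqrt) (auto simp: power2_eq_square)
  have "sqrt 2 * r \<le> 1415/1000 * r" using s2' r by (intro mult_right_mono) auto
  then have sr: "sqrt 2 * r \<le> 1/4" using r by linarith
  have mu: "p * m > 0" using m p by auto
  have X34: "X > 3/4 * (p * m)"
  proof -
    have "3/4 * (p*m) \<le> (1 - sqrt 2 * r) * (p * m)" using sr mu by (intro mult_right_mono) auto
    then show ?thesis using lo by linarith
  qed
  then have Xpos: "X > 0" using mu by linarith
  have key: "\<bar>p * m - X\<bar> \<le> 2 * r * X"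
  proof (cases "X \<ge> p * m")
    case True
    have "X - p * m < 2 * r * (p * m)" using hi by (simp add: algebra_simps)
    also have "\<dots> \<le> 2 * r * X" using True r by (intro mult_left_mono) auto
    finally show ?thesis using True by simp
  next
    case False
    have "p * m - X < sqrt 2 * r * (p * m)" using lo by (simp add: algebra_simps)
    also have "\<dots> \<le> 3/2 * r * (p * m)" using mult_right_mono[OF s2r less_imp_le[OF mu]] .
    also have "\<dots> = r * (3/2 * (p * m))" by simp
    also have "\<dots> \<le> r * (2 * X)" using X34 r(1) by (intro mult_left_mono) auto
    also have "\<dots> = 2 * r * X" by simp
    finally show ?thesis using False by simp
  qed
  have "p / X - 1 / m = (p * m - X) / (X * m)" using Xpos m by (simp add: field_simps)
  then have "\<bar>p / X - 1 / m\<bar> = \<bar>p * m - X\<bar> / (X * m)" using Xpos by simp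
  also have "\<dots> \<le> 2 * r * X / (X * m)" using key Xpos m by (intro divide_right_mono) auto
  also have "\<dots> = 2 * r / m" using Xpos by simp
  finally show ?thesis using Xpos by simp
qed

lemma block_facts:
  fixes n :: nat and S :: "nat set"
  assumes P: "partition_on {1..n} \<Gamma>" and S: "S \<in> \<Gamma>"
  shows "S \<subseteq> {1..n}" "finite \<Gamma>" "card S > 0" "Min (card ` \<Gamma>) > 0"
    "Min (card ` \<Gamma>) \<le> card S" "card S \<le> Max (card ` \<Gamma>)"
proof -
  show sub: "S \<subseteq> {1..n}" using partition_onD1[OF P] S by blast
  have "\<Gamma> \<subseteq> Pow {1..n}" using partition_onD1[OF P] by blast
  then show fin: "finite \<Gamma>" by (rule finite_subset) simp
  have ne: "\<And>X. X \<in> \<Gamma> \<Longrightarrow> card X > 0"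
  proof -
    fix X assume X: "X \<in> \<Gamma>"
    have "X \<subseteq> {1..n}" using partition_onD1[OF P] X by blast
    then have "finite X" by (rule finite_subset) simp
    moreover have "X \<noteq> {}" using partition_onD3[OF P] X by blast
    ultimately show "card X > 0" by auto
  qed
  show "card S > 0" using ne S .
  have "Min (card ` \<Gamma>) \<in> card ` \<Gamma>" using fin S by (intro Min_in) auto
  then show "Min (card ` \<Gamma>) > 0" using ne by auto
  show "Min (card ` \<Gamma>) \<le> card S" using fin S by (intro Min_le) auto
  show "card S \<le> Max (card ` \<Gamma>)" using fin S by (intro Max_ge) auto
qed

lemma r_bound:
  fixes L p :: real and m nmin :: nat
  assumes L: "L > 0" and p: "p > 0" and m: "nmin \<le> m" "nmin > 0"
    and h: "p * nmin \<ge> 104/3 * L"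
  shows "sqrt (L / (p * m)) \<le> 17/100" "sqrt (L / (p * m)) > 0"
    "sqrt (L / (p * m)) / m \<le> sqrt (L / (p * real nmin ^ 3))"
proof -
  have mpos: "real m > 0" using m by auto
  have n0: "real nmin > 0" using m by auto
  have "p * nmin \<le> p * m" using m p by (intro mult_left_mono) auto
  then have pm: "104/3 * L \<le> p * m" using h by linarith
  have pmpos: "p * m > 0" using p mpos by auto
  have "L / (p * m) \<le> 3/104" using pm pmpos by (simp add: divide_le_eq)
  also have "\<dots> \<le> (17/100)^2" by (simp add: power2_eq_square)
  finally show "sqrt (L / (p * m)) \<le> 17/100" using real_le_lsqrt[of "17/100"] by auto
  show "sqrt (L / (p * m)) > 0" using L pmpos by simp
  have e1: "L / (p * real m ^ 3) = (L / (p * m)) / (real m)^2"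
    using mpos p by (simp add: field_simps power2_eq_square power3_eq_cube)
  have "sqrt (L / (p * real m ^ 3)) = sqrt (L / (p * m)) / sqrt ((real m)^2)"
    unfolding e1 by (rule real_sqrt_divide)
  then have "sqrt (L / (p * m)) / m = sqrt (L / (p * real m ^ 3))" using mpos by simp
  also have "\<dots> \<le> sqrt (L / (p * real nmin ^ 3))"
  proof (rule real_sqrt_le_mono, rule divide_left_mono)
    show "p * real nmin ^ 3 \<le> p * real m ^ 3" using m p by (intro mult_left_mono power_mono) auto
  qed (use L p n0 mpos in auto)
  finally show "sqrt (L / (p * m)) / m \<le> sqrt (L / (p * real nmin ^ 3))" .
qed

theorem lemma12:
  fixes n k :: nat and \<Gamma> :: "nat set set" and p \<epsilon> :: real and S T :: "nat set"
  assumes "partition_on {1..n} \<Gamma>" and "card \<Gamma> = k"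
    and "0 < p" and "p \<le> 1"
    and "S \<in> \<Gamma>" and "T \<in> \<Gamma>" and "S \<noteq> T"
    and "0 < \<epsilon>" and "\<epsilon> < 1"
    and "p * real (Min (card ` \<Gamma>)) \<ge>
           104/3 * (real (Max (card ` \<Gamma>)) / real (Min (card ` \<Gamma>)))^2 * ln (6/\<epsilon>)"
  shows "measure_pmf.prob (random_subset_pmf n p)
           {w. card (S \<inter> {i. w i}) > 0 \<and> card (T \<inter> {i. w i}) > 0 \<and>
               \<bar>p * (1 / real (card (S \<inter> {i. w i})) + 1 / real (card (T \<inter> {i. w i})))
                 - (1 / real (card S) + 1 / real (card T))\<bar>
               < sqrt (104/3 * ln (6/\<epsilon>) / (p * real (Min (card ` \<Gamma>)) ^ 3))}
         \<ge> 1 - \<epsilon>"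
proof -
  note P = assms(1)
  have p01: "p \<in> {0..1}" using assms(3,4) by auto
  define nmin where "nmin = Min (card ` \<Gamma>)"
  define nmax where "nmax = Max (card ` \<Gamma>)"
  define L where "L = ln (6 / \<epsilon>)"
  have L: "L > 0" unfolding L_def using assms(8,9) by (simp add: ln_gt_zero_iff field_simps)
  have expL: "exp (- L) = \<epsilon> / 6" unfolding L_def using assms(8) by (simp add: exp_minus)
  note bS = block_facts[OF P assms(5), folded nmin_def nmax_def]
  note bT = block_facts[OF P assms(6), folded nmin_def nmax_def]
  have ratio: "(real nmax / real nmin)^2 \<ge> 1"
  proof -
    have "real nmin \<le> real nmax" using bS by linarith
    then have "real nmax / real nmin \<ge> 1" using bS by simp
    then show ?thesis by (simp add: one_le_power)
  qed
  have h: "p * nmin \<ge> 104/3 * L"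
  proof -
    have "104/3 * L \<le> 104/3 * (real nmax / real nmin)^2 * L" using ratio L by simp
    then show ?thesis using assms(10) unfolding nmin_def nmax_def L_def by linarith
  qed
  define X where "X = (\<lambda>A w. real (card (A \<inter> {i::nat. w i})))"
  define r where "r = (\<lambda>A::nat set. sqrt (L / (p * card A)))"
  define B1 where "B1 = (\<lambda>A. {w. real (card (A \<inter> {i::nat. w i})) \<le> (1 - sqrt 2 * r A) * (card A * p)})"
  define B2 where "B2 = (\<lambda>A. {w. (1 + 2 * r A) * (card A * p) \<le> real (card (A \<inter> {i::nat. w i}))})"
  have rb: "r A \<le> 17/100" "r A > 0" "r A / card A \<le> sqrt (L / (p * real nmin ^ 3))"
    if "A \<in> \<Gamma>" for A
    using r_bound[OF L assms(3) _ _ h, of "card A"] block_facts[OF P that, folded nmin_def nmax_def]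
    unfolding r_def by auto
  have rsq: "(r A)^2 = L / (p * card A)" if "A \<in> \<Gamma>" for A
    using L assms(3) block_facts[OF P that] unfolding r_def by simp
  have pB1: "measure_pmf.prob (random_subset_pmf n p) (B1 A) \<le> \<epsilon> / 6" if A: "A \<in> \<Gamma>" for A
  proof -
    have "measure_pmf.prob (random_subset_pmf n p) (B1 A)
        = measure_pmf.prob (binomial_pmf (card A) p) {k. real k \<le> (1 - sqrt 2 * r A) * (card A * p)}"
      unfolding B1_def using card_dist[OF block_facts(1)[OF P A] p01, of "\<lambda>k. real k \<le> (1 - sqrt 2 * r A) * (card A * p)"]
      by simp
    also have "\<dots> \<le> exp (- ((sqrt 2 * r A)^2 * (card A * p) / 2))"
      using rb[OF A] assms(3,4) by (intro binom_lower) auto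
    also have "(sqrt 2 * r A)^2 * (card A * p) / 2 = L"
      using rsq[OF A] block_facts[OF P A] assms(3) by (simp add: power_mult_distrib)
    finally show ?thesis using expL by simp
  qed
  have pB2: "measure_pmf.prob (random_subset_pmf n p) (B2 A) \<le> \<epsilon> / 6" if A: "A \<in> \<Gamma>" for A
  proof -
    have "measure_pmf.prob (random_subset_pmf n p) (B2 A)
        = measure_pmf.prob (binomial_pmf (card A) p) {k. (1 + 2 * r A) * (card A * p) \<le> real k}"
      unfolding B2_def using card_dist[OF block_facts(1)[OF P A] p01, of "\<lambda>k. (1 + 2 * r A) * (card A * p) \<le> real k"]
      by simp
    also have "\<dots> \<le> exp (- ((2 * r A)^2 * (card A * p) / 4))"
      using rb[OF A] assms(3,4) by (intro binom_upper) auto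
    also have "(2 * r A)^2 * (card A * p) / 4 = L"
      using rsq[OF A] block_facts[OF P A] assms(3) by (simp add: power_mult_distrib)
    finally show ?thesis using expL by simp
  qed
  have good: "\<exists>x>0. \<bar>p / x - 1 / card A\<bar> \<le> 2 * r A / card A \<and> x = real (card (A \<inter> {i. w i}))"
    if A: "A \<in> \<Gamma>" and w: "w \<notin> B1 A" "w \<notin> B2 A" for A w
  proof -
    have "real (card (A \<inter> {i. w i})) > 0 \<and> \<bar>p / real (card (A \<inter> {i. w i})) - 1 / card A\<bar> \<le> 2 * r A / card A"
    proof (rule dev)
      show "card A > 0" using block_facts[OF P A] by simp
    qed (use assms(3) rb[OF A] w in \<open>auto simp: B1_def B2_def mult_ac\<close>)
    then show ?thesis by blast
  qed
  define G where "G = {w. card (S \<inter> {i. w i}) > 0 \<and> card (T \<inter> {i. w i}) > 0 \<and>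
               \<bar>p * (1 / real (card (S \<inter> {i. w i})) + 1 / real (card (T \<inter> {i. w i})))
                 - (1 / real (card S) + 1 / real (card T))\<bar>
               < sqrt (104/3 * ln (6/\<epsilon>) / (p * real (Min (card ` \<Gamma>)) ^ 3))}"
  have cover: "UNIV \<subseteq> G \<union> (B1 S \<union> B2 S \<union> B1 T \<union> B2 T)"
  proof
    fix w :: "nat \<Rightarrow> bool"
    assume "w \<in> UNIV"
    show "w \<in> G \<union> (B1 S \<union> B2 S \<union> B1 T \<union> B2 T)"
    proof (cases "w \<in> B1 S \<union> B2 S \<union> B1 T \<union> B2 T")
      case False
      obtain xs where xs: "xs > 0" "\<bar>p / xs - 1 / card S\<bar> \<le> 2 * r S / card S" "xs = real (card (S \<inter> {i. w i}))"
        using good[OF assms(5)] False by blast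
      obtain xt where xt: "xt > 0" "\<bar>p / xt - 1 / card T\<bar> \<le> 2 * r T / card T" "xt = real (card (T \<inter> {i. w i}))"
        using good[OF assms(6)] False by blast
      define Q where "Q = L / (p * real nmin ^ 3)"
      have Q: "Q > 0" unfolding Q_def using L assms(3) bS by simp
      have "\<bar>p * (1 / xs + 1 / xt) - (1 / card S + 1 / card T)\<bar>
          = \<bar>(p / xs - 1 / card S) + (p / xt - 1 / card T)\<bar>" by (simp add: algebra_simps)
      also have "\<dots> \<le> 2 * r S / card S + 2 * r T / card T" using xs xt by linarith
      also have "\<dots> \<le> 4 * sqrt Q" using rb[OF assms(5)] rb[OF assms(6)] unfolding Q_def by simp
      also have "\<dots> < sqrt (104/3) * sqrt Q"
      proof -
        have "4 < sqrt (104/3::real)" by (rule real_less_rsqrt) simp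
        then show ?thesis using Q by simp
      qed
      also have "\<dots> = sqrt (104/3 * ln (6/\<epsilon>) / (p * real (Min (card ` \<Gamma>)) ^ 3))"
        unfolding Q_def L_def nmin_def by (simp add: real_sqrt_mult[symmetric])
      finally show ?thesis using xs xt unfolding G_def by auto
    qed auto
  qed
  let ?M = "random_subset_pmf n p"
  have U: "G \<union> (B1 S \<union> B2 S \<union> B1 T \<union> B2 T) = UNIV" using cover by blast
  have "1 \<le> measure_pmf.prob ?M (G \<union> (B1 S \<union> B2 S \<union> B1 T \<union> B2 T))"
    unfolding U by simp
  also have "\<dots> \<le> measure_pmf.prob ?M G + measure_pmf.prob ?M (B1 S \<union> B2 S \<union> B1 T \<union> B2 T)"
    by (rule measure_Un_le) auto
  also have "measure_pmf.prob ?M (B1 S \<union> B2 S \<union> B1 T \<union> B2 T)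
      \<le> measure_pmf.prob ?M (B1 S) + measure_pmf.prob ?M (B2 S) + measure_pmf.prob ?M (B1 T) + measure_pmf.prob ?M (B2 T)"
    by (smt (verit) measure_Un_le sets_measure_pmf UNIV_I)
  also have "\<dots> \<le> 4 * (\<epsilon> / 6)"
    using pB1[OF assms(5)] pB2[OF assms(5)] pB1[OF assms(6)] pB2[OF assms(6)] by linarith
  finally show ?thesis unfolding G_def using assms(8) by linarith
qed

end
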